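(* Let $(\Omega,\mu)$ be a measure space and $1<p<\infty$. Let $\mathcal U\subset\mathbb C$ be an open set, let $\Gamma\subset\mathcal U$ be a compact $C^1$-curve, and let $\varphi\colon\mathcal U\to B(L^p(\Omega))$ be an analytic function. Then there exists a constant $C\ge 0$ such that $$\Big\|\Big(\int_\Gamma |\varphi(\lambda)x|^2\,|d\lambda|\Big)^{1/2}\Big\|_p\le C\|x\|_p\qquad\text{for all }x\in L^p(\Omega).$$
   Context: $B(X)$ denotes the algebra of bounded operators on a Banach space $X$; $|d\lambda|$ is arc-length measure on $\Gamma$. *)

theory Defs
  imports "HOL-Analysis.Analysis"
begin

text \<open>Complex L^p space over a measure space M, represented by measurable
  representatives (elements equal a.e. are identified only implicitly through the norm).\<close>

definition Lp_set :: "real \<Rightarrow> 'a measure \<Rightarrow> ('a \<Rightarrow> complex) set" where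
  "Lp_set p M = {f. f \<in> borel_measurable M \<and> integrable M (\<lambda>w. norm (f w) powr p)}"

definition lp_norm :: "real \<Rightarrow> 'a measure \<Rightarrow> ('a \<Rightarrow> complex) \<Rightarrow> real" where
  "lp_norm p M f = (\<integral>w. norm (f w) powr p \<partial>M) powr (1 / p)"

definition bounded_op :: "real \<Rightarrow> 'a measure \<Rightarrow> (('a \<Rightarrow> complex) \<Rightarrow> ('a \<Rightarrow> complex)) \<Rightarrow> bool" where
  "bounded_op p M T \<longleftrightarrow>
     (\<forall>f\<in>Lp_set p M. T f \<in> Lp_set p M) \<and>
     (\<forall>f\<in>Lp_set p M. \<forall>g\<in>Lp_set p M. T (\<lambda>w. f w + g w) = (\<lambda>w. T f w + T g w)) \<and>
     (\<forall>f\<in>Lp_set p M. \<forall>c::complex. T (\<lambda>w. c * f w) = (\<lambda>w. c * T f w)) \<and>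
     (\<exists>K. \<forall>f\<in>Lp_set p M. lp_norm p M (T f) \<le> K * lp_norm p M f)"

definition op_norm :: "real \<Rightarrow> 'a measure \<Rightarrow> (('a \<Rightarrow> complex) \<Rightarrow> ('a \<Rightarrow> complex)) \<Rightarrow> real" where
  "op_norm p M T = Sup {lp_norm p M (T f) | f. f \<in> Lp_set p M \<and> lp_norm p M f \<le> 1}"

definition analytic_op_on ::
  "real \<Rightarrow> 'a measure \<Rightarrow> complex set \<Rightarrow> (complex \<Rightarrow> ('a \<Rightarrow> complex) \<Rightarrow> ('a \<Rightarrow> complex)) \<Rightarrow> bool" where
  "analytic_op_on p M U \<phi> \<longleftrightarrow>
     (\<forall>z\<in>U. bounded_op p M (\<phi> z)) \<and>
     (\<forall>z0\<in>U. \<exists>r>0. ball z0 r \<subseteq> U \<and>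
        (\<exists>A :: nat \<Rightarrow> ('a \<Rightarrow> complex) \<Rightarrow> ('a \<Rightarrow> complex).
           (\<forall>n. bounded_op p M (A n)) \<and>
           (\<forall>z\<in>ball z0 r.
              (\<lambda>N. op_norm p M (\<lambda>f w. \<phi> z f w - (\<Sum>n<N. (z - z0) ^ n * A n f w)))
                \<longlonglongrightarrow> 0)))"

text \<open>A compact C^1 curve, parametrised on [0,1]: continuously differentiable
  (one-sided derivatives at the endpoints).\<close>

definition C1_curve :: "(real \<Rightarrow> complex) \<Rightarrow> bool" where
  "C1_curve \<gamma> \<longleftrightarrow> (\<exists>D. (\<forall>t\<in>{0..1}. (\<gamma> has_vector_derivative D t) (at t within {0..1}))
                         \<and> continuous_on {0..1} D)"

end

theory Submission
  imports Defs
begin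


lemma lp_norm_nonneg: "lp_norm p M f \<ge> 0"
  by (simp add: lp_norm_def)

lemma lp_norm_pow:
  assumes "f \<in> Lp_set p M" "p > 0"
  shows "lp_norm p M f powr p = (\<integral>w. norm (f w) powr p \<partial>M)"
proof -
  have "(\<integral>w. norm (f w) powr p \<partial>M) \<ge> 0" by (rule integral_nonneg_AE) auto
  thus ?thesis using assms by (simp add: lp_norm_def powr_powr)
qed

lemma lp_norm_via_pow:
  assumes "p > 0" "0 \<le> I" "(\<integral>w. norm (f w) powr p \<partial>M) \<le> I powr p"
  shows "lp_norm p M f \<le> I"
proof -
  have "lp_norm p M f \<le> (I powr p) powr (1/p)"
    unfolding lp_norm_def using assms
    by (intro powr_mono2) (auto intro: integral_nonneg_AE)
  thus ?thesis using assms by (simp add: powr_powr)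
qed

lemma Lp_mono:
  assumes "f \<in> Lp_set p M" "g \<in> borel_measurable M" "p > 0"
    "AE w in M. norm (g w) \<le> norm (f w)"
  shows "g \<in> Lp_set p M" "lp_norm p M g \<le> lp_norm p M f"
proof -
  have fi: "integrable M (\<lambda>w. norm (f w) powr p)" using assms by (simp add: Lp_set_def)
  have gi: "integrable M (\<lambda>w. norm (g w) powr p)"
    apply (rule Bochner_Integration.integrable_bound[OF fi])
    using assms(2) apply measurable
    using assms(4) by eventually_elim (auto intro!: powr_mono2 simp: assms(3) less_imp_le)
  thus "g \<in> Lp_set p M" using assms by (simp add: Lp_set_def)
  have "(\<integral>w. norm (g w) powr p \<partial>M) \<le> (\<integral>w. norm (f w) powr p \<partial>M)"
    apply (rule integral_mono_AE[OF gi fi])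
    using assms(4) by eventually_elim (auto intro!: powr_mono2 simp: assms(3) less_imp_le)
  thus "lp_norm p M g \<le> lp_norm p M f" unfolding lp_norm_def
    by (intro powr_mono2) (auto intro: integral_nonneg_AE simp: assms(3) less_imp_le)
qed

lemma Lp_scale:
  assumes "f \<in> Lp_set p M" "p > 0"
  shows "(\<lambda>w. c * f w) \<in> Lp_set p M" "lp_norm p M (\<lambda>w. c * f w) = cmod c * lp_norm p M f"
proof -
  have e: "\<And>w. norm (c * f w) powr p = cmod c powr p * norm (f w) powr p"
    by (simp add: norm_mult powr_mult)
  have fm[measurable]: "f \<in> borel_measurable M" using assms by (simp add: Lp_set_def)
  have "(\<lambda>w. c * f w) \<in> borel_measurable M" by measurable
  then show "(\<lambda>w. c * f w) \<in> Lp_set p M" using assms by (simp add: Lp_set_def e)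
  have "lp_norm p M (\<lambda>w. c * f w) = (cmod c powr p * (\<integral>w. norm (f w) powr p \<partial>M)) powr (1/p)"
    unfolding lp_norm_def e by simp
  also have "\<dots> = (cmod c powr p) powr (1/p) * lp_norm p M f"
    unfolding lp_norm_def by (rule powr_mult; auto intro: integral_nonneg_AE)
  also have "\<dots> = cmod c * lp_norm p M f" using assms by (simp add: powr_powr)
  finally show "lp_norm p M (\<lambda>w. c * f w) = cmod c * lp_norm p M f" .
qed

lemma conv_pow:
  fixes u v l p :: real
  assumes "0 \<le> u" "0 \<le> v" "0 \<le> l" "l \<le> 1" "p \<ge> 1"
  shows "(l * u + (1 - l) * v) powr p \<le> l * u powr p + (1 - l) * v powr p"
proof (cases "u > 0 \<and> v > 0")
  case True
  have "convex_on {0<..} (\<lambda>x::real. x powr p)" by (rule powr_convex) fact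
  from convex_onD[OF this, of l v u] True assms show ?thesis
    by (simp add: algebra_simps)
next
  case False
  have aux: "\<And>a y. 0 \<le> a \<Longrightarrow> a \<le> 1 \<Longrightarrow> 0 \<le> y \<Longrightarrow> (a * y) powr p \<le> a * y powr p"
  proof -
    fix a y :: real assume a: "0 \<le> a" "a \<le> 1" "0 \<le> y"
    have "a powr p \<le> a" using a assms by (metis powr_one powr_mono')
    hence "a powr p * y powr p \<le> a * y powr p" by (intro mult_right_mono) auto
    thus "(a * y) powr p \<le> a * y powr p" using a by (simp add: powr_mult)
  qed
  show ?thesis
  proof (cases "u = 0")
    case True
    thus ?thesis using aux[of "1-l" v] assms by auto
  next
    case False
    hence "v = 0" using \<open>\<not> (u > 0 \<and> v > 0)\<close> assms by auto
    thus ?thesis using aux[of l u] assms by auto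
  qed
qed

lemma Lp_add_mem:
  assumes "f \<in> Lp_set p M" "g \<in> Lp_set p M" "p > 0"
  shows "(\<lambda>w. f w + g w) \<in> Lp_set p M"
proof -
  have m: "f \<in> borel_measurable M" "g \<in> borel_measurable M" using assms by (auto simp: Lp_set_def)
  have i: "integrable M (\<lambda>w. 2 powr p * (norm (f w) powr p + norm (g w) powr p))"
    using assms by (auto simp: Lp_set_def)
  have "integrable M (\<lambda>w. norm (f w + g w) powr p)"
  proof (rule Bochner_Integration.integrable_bound[OF i])
    show "(\<lambda>w. norm (f w + g w) powr p) \<in> borel_measurable M" using m by measurable
    show "AE w in M. norm (norm (f w + g w) powr p) \<le> norm (2 powr p * (norm (f w) powr p + norm (g w) powr p))"
    proof (rule AE_I2)
      fix w
      let ?a = "norm (f w)" and ?b = "norm (g w)"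
      have "norm (f w + g w) \<le> 2 * max ?a ?b" using norm_triangle_ineq[of "f w" "g w"] by linarith
      hence "norm (f w + g w) powr p \<le> (2 * max ?a ?b) powr p" using assms by (intro powr_mono2) auto
      also have "\<dots> = 2 powr p * max ?a ?b powr p" by (simp add: powr_mult)
      also have "\<dots> \<le> 2 powr p * (?a powr p + ?b powr p)"
        by (intro mult_left_mono) (auto simp: max_def)
      finally show "norm (norm (f w + g w) powr p) \<le> norm (2 powr p * (norm (f w) powr p + norm (g w) powr p))"
        by simp
    qed
  qed
  thus ?thesis using m by (auto simp: Lp_set_def)
qed

lemma Lp_minkowski:
  assumes f: "f \<in> Lp_set p M" and g: "g \<in> Lp_set p M" and p: "p \<ge> 1"
  shows "lp_norm p M (\<lambda>w. f w + g w) \<le> lp_norm p M f + lp_norm p M g"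
proof -
  have p0: "p > 0" using p by auto
  let ?a = "lp_norm p M f" and ?b = "lp_norm p M g"
  have fg: "(\<lambda>w. f w + g w) \<in> Lp_set p M" by (rule Lp_add_mem[OF f g p0])
  have key: "lp_norm p M (\<lambda>w. f w + g w) \<le> ?a + ?b + 2 * e" if e: "e > 0" for e
  proof -
    define a where "a = ?a + e"
    define b where "b = ?b + e"
    have a0: "a > 0" "b > 0" using e lp_norm_nonneg[of p M f] lp_norm_nonneg[of p M g]
      by (auto simp: a_def b_def)
    define l where "l = a / (a + b)"
    have l: "0 \<le> l" "l \<le> 1" "1 - l = b / (a + b)" using a0 by (auto simp: l_def field_simps)
    have fi: "integrable M (\<lambda>w. norm (f w) powr p)" and gi: "integrable M (\<lambda>w. norm (g w) powr p)"
      using f g by (auto simp: Lp_set_def)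
    have pt: "norm (f w + g w) powr p \<le> (a + b) powr p * (l * (norm (f w) / a) powr p + (1 - l) * (norm (g w) / b) powr p)" for w
    proof -
      have "norm (f w + g w) powr p \<le> (norm (f w) + norm (g w)) powr p"
        using p0 by (intro powr_mono2) (auto intro: norm_triangle_ineq)
      also have "norm (f w) + norm (g w) = (a + b) * (l * (norm (f w) / a) + (1 - l) * (norm (g w) / b))"
      proof -
        have "(a + b) * (l * (norm (f w) / a)) = norm (f w)" using a0 by (simp add: l_def)
        moreover have "(a + b) * ((1 - l) * (norm (g w) / b)) = norm (g w)" using a0 by (simp add: l(3))
        ultimately show ?thesis by (simp add: distrib_left)
      qed
      also have "\<dots> powr p = (a + b) powr p * (l * (norm (f w) / a) + (1 - l) * (norm (g w) / b)) powr p"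
        using a0 l by (simp add: powr_mult)
      also have "\<dots> \<le> (a + b) powr p * (l * (norm (f w) / a) powr p + (1 - l) * (norm (g w) / b) powr p)"
        using a0 l p by (intro mult_left_mono conv_pow) auto
      finally show ?thesis .
    qed
    have pt': "norm (f w + g w) powr p \<le> (a + b) powr p * (l / a powr p * norm (f w) powr p + (1 - l) / b powr p * norm (g w) powr p)" for w
      using pt[of w] a0 by (simp add: powr_divide)
    have "(\<integral>w. norm (f w + g w) powr p \<partial>M) \<le>
        (\<integral>w. (a + b) powr p * (l / a powr p * norm (f w) powr p + (1 - l) / b powr p * norm (g w) powr p) \<partial>M)"
      using fg fi gi by (intro integral_mono pt') (auto simp: Lp_set_def)
    also have "\<dots> = (a + b) powr p * (l / a powr p * (\<integral>w. norm (f w) powr p \<partial>M) + (1 - l) / b powr p * (\<integral>w. norm (g w) powr p \<partial>M))"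
      using fi gi by simp
    also have "(\<integral>w. norm (f w) powr p \<partial>M) = ?a powr p" using lp_norm_pow[OF f p0] by simp
    also have "(\<integral>w. norm (g w) powr p \<partial>M) = ?b powr p" using lp_norm_pow[OF g p0] by simp
    also have "l / a powr p * ?a powr p \<le> l"
    proof -
      have "?a powr p \<le> a powr p" using lp_norm_nonneg[of p M f] p0 by (intro powr_mono2) (auto simp: a_def e less_imp_le)
      thus ?thesis using l a0 by (auto simp: field_simps intro: mult_left_mono)
    qed
    also have "(1 - l) / b powr p * ?b powr p \<le> 1 - l"
    proof -
      have "?b powr p \<le> b powr p" using lp_norm_nonneg[of p M g] p0 by (intro powr_mono2) (auto simp: b_def e less_imp_le)
      hence "(1 - l) / b powr p * ?b powr p \<le> (1 - l) / b powr p * b powr p"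
        using l by (intro mult_left_mono divide_nonneg_nonneg) auto
      thus ?thesis using a0 by simp
    qed
    finally have "(\<integral>w. norm (f w + g w) powr p \<partial>M) \<le> (a + b) powr p * (l + (1 - l))"
      using a0 by (simp add: mult_left_mono)
    hence "lp_norm p M (\<lambda>w. f w + g w) \<le> a + b" using a0 p0 by (intro lp_norm_via_pow) auto
    thus ?thesis by (simp add: a_def b_def)
  qed
  show ?thesis
  proof (rule field_le_epsilon)
    fix e :: real assume "e > 0"
    thus "lp_norm p M (\<lambda>w. f w + g w) \<le> ?a + ?b + e" using key[of "e/2"] by auto
  qed
qed



lemma Lp_zero: "(\<lambda>w. 0) \<in> Lp_set p M" "p > 0 \<Longrightarrow> lp_norm p M (\<lambda>w. 0) = 0"
  by (auto simp: Lp_set_def lp_norm_def)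

lemma Lp_sum:
  assumes "finite S" "\<And>i. i \<in> S \<Longrightarrow> f i \<in> Lp_set p M" "p \<ge> 1"
  shows "(\<lambda>w. \<Sum>i\<in>S. f i w) \<in> Lp_set p M \<and> lp_norm p M (\<lambda>w. \<Sum>i\<in>S. f i w) \<le> (\<Sum>i\<in>S. lp_norm p M (f i))"
  using assms
proof (induction S rule: finite_induct)
  case empty
  then show ?case using Lp_zero[of p M] by simp
next
  case (insert x F)
  have fx: "f x \<in> Lp_set p M" using insert by auto
  from insert have IH: "(\<lambda>w. \<Sum>i\<in>F. f i w) \<in> Lp_set p M"
    "lp_norm p M (\<lambda>w. \<Sum>i\<in>F. f i w) \<le> (\<Sum>i\<in>F. lp_norm p M (f i))" by auto
  have "(\<lambda>w. f x w + (\<Sum>i\<in>F. f i w)) \<in> Lp_set p M"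
    using Lp_add_mem[OF fx IH(1)] insert by auto
  moreover have "lp_norm p M (\<lambda>w. f x w + (\<Sum>i\<in>F. f i w)) \<le> lp_norm p M (f x) + (\<Sum>i\<in>F. lp_norm p M (f i))"
    using Lp_minkowski[OF fx IH(1)] IH(2) insert by auto
  ultimately show ?case using insert by simp
qed

lemma Lp_diff:
  assumes "f \<in> Lp_set p M" "g \<in> Lp_set p M" "p \<ge> 1"
  shows "(\<lambda>w. f w - g w) \<in> Lp_set p M" "lp_norm p M (\<lambda>w. f w - g w) \<le> lp_norm p M f + lp_norm p M g"
proof -
  have g': "(\<lambda>w. (-1) * g w) \<in> Lp_set p M" "lp_norm p M (\<lambda>w. (-1) * g w) = lp_norm p M g"
    using Lp_scale[OF assms(2), of "-1"] assms by auto
  show "(\<lambda>w. f w - g w) \<in> Lp_set p M" using Lp_add_mem[OF assms(1) g'(1)] assms by simp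
  show "lp_norm p M (\<lambda>w. f w - g w) \<le> lp_norm p M f + lp_norm p M g"
    using Lp_minkowski[OF assms(1) g'(1)] g'(2) assms by simp
qed

lemma op_bound:
  assumes p: "p > 0"
    and K: "\<And>f. f \<in> Lp_set p M \<Longrightarrow> T f \<in> Lp_set p M \<and> lp_norm p M (T f) \<le> K * lp_norm p M f"
    and H: "\<And>f c. f \<in> Lp_set p M \<Longrightarrow> T (\<lambda>w. c * f w) = (\<lambda>w. c * T f w)"
    and f: "f \<in> Lp_set p M"
  shows "lp_norm p M (T f) \<le> op_norm p M T * lp_norm p M f"
proof (cases "lp_norm p M f = 0")
  case True
  then show ?thesis using K[OF f] lp_norm_nonneg[of p M "T f"] by simp
next
  case False
  define s where "s = lp_norm p M f"
  have s: "s > 0" using False lp_norm_nonneg[of p M f] by (simp add: s_def)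
  define g where "g = (\<lambda>w. complex_of_real (1/s) * f w)"
  have g: "g \<in> Lp_set p M" "lp_norm p M g = 1"
    using Lp_scale[OF f p, of "complex_of_real (1/s)"] s by (auto simp: g_def s_def norm_divide)
  have Tg: "T g = (\<lambda>w. complex_of_real (1/s) * T f w)" unfolding g_def by (rule H[OF f])
  have nTg: "lp_norm p M (T g) = (1/s) * lp_norm p M (T f)"
    using Lp_scale[of "T f" p M "complex_of_real (1/s)"] K[OF f] p s Tg by (simp add: norm_divide)
  have bdd: "bdd_above {lp_norm p M (T f) | f. f \<in> Lp_set p M \<and> lp_norm p M f \<le> 1}"
  proof (rule bdd_aboveI[where M = "max K 0"])
    fix x assume "x \<in> {lp_norm p M (T f) | f. f \<in> Lp_set p M \<and> lp_norm p M f \<le> 1}"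
    then obtain h where h: "x = lp_norm p M (T h)" "h \<in> Lp_set p M" "lp_norm p M h \<le> 1" by auto
    have "K * lp_norm p M h \<le> max K 0"
    proof (cases "K \<ge> 0")
      case True thus ?thesis using h mult_left_mono[OF h(3) True] by simp
    next
      case False thus ?thesis using lp_norm_nonneg[of p M h] by (simp add: mult_nonpos_nonneg)
    qed
    thus "x \<le> max K 0" using K[OF h(2)] h(1) by simp
  qed
  have "lp_norm p M (T g) \<le> op_norm p M T"
    unfolding op_norm_def by (rule cSup_upper[OF _ bdd]) (use g in auto)
  hence "(1/s) * lp_norm p M (T f) \<le> op_norm p M T" using nTg by simp
  thus ?thesis using s by (simp add: s_def field_simps)
qed

lemma bounded_opE:
  assumes "bounded_op p M T"
  obtains K where "\<And>f. f \<in> Lp_set p M \<Longrightarrow> T f \<in> Lp_set p M \<and> lp_norm p M (T f) \<le> K * lp_norm p M f"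
    "K \<ge> 0"
    "\<And>f c. f \<in> Lp_set p M \<Longrightarrow> T (\<lambda>w. c * f w) = (\<lambda>w. c * T f w)"
proof -
  from assms obtain K where K: "\<forall>f\<in>Lp_set p M. lp_norm p M (T f) \<le> K * lp_norm p M f"
    unfolding bounded_op_def by blast
  have "lp_norm p M (T f) \<le> max K 0 * lp_norm p M f" if "f \<in> Lp_set p M" for f
    using K that lp_norm_nonneg[of p M f] by (smt (verit) mult_right_mono)
  thus ?thesis using that[of "max K 0"] assms unfolding bounded_op_def by auto
qed



definition Dop :: "(complex \<Rightarrow> ('a \<Rightarrow> complex) \<Rightarrow> ('a \<Rightarrow> complex)) \<Rightarrow> (nat \<Rightarrow> ('a \<Rightarrow> complex) \<Rightarrow> ('a \<Rightarrow> complex))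
   \<Rightarrow> complex \<Rightarrow> complex \<Rightarrow> nat \<Rightarrow> ('a \<Rightarrow> complex) \<Rightarrow> ('a \<Rightarrow> complex)" where
  "Dop \<phi> A z0 z N = (\<lambda>f w. \<phi> z f w - (\<Sum>n<N. (z - z0) ^ n * A n f w))"

lemma D_bound:
  assumes p: "p \<ge> 1" and bphi: "bounded_op p M (\<phi> z)" and bA: "\<And>n. bounded_op p M (A n)"
    and f: "f \<in> Lp_set p M"
  shows "Dop \<phi> A z0 z N f \<in> Lp_set p M"
    "lp_norm p M (Dop \<phi> A z0 z N f) \<le> op_norm p M (Dop \<phi> A z0 z N) * lp_norm p M f"
proof -
  have p0: "p > 0" using p by auto
  obtain Kp where Kp: "\<And>f. f \<in> Lp_set p M \<Longrightarrow> \<phi> z f \<in> Lp_set p M \<and> lp_norm p M (\<phi> z f) \<le> Kp * lp_norm p M f"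
    "\<And>f c. f \<in> Lp_set p M \<Longrightarrow> \<phi> z (\<lambda>w. c * f w) = (\<lambda>w. c * \<phi> z f w)"
    using bounded_opE[OF bphi] by metis
  have "\<forall>n. \<exists>K. (\<forall>f\<in>Lp_set p M. A n f \<in> Lp_set p M \<and> lp_norm p M (A n f) \<le> K * lp_norm p M f) \<and> K \<ge> 0"
    using bounded_opE[OF bA] by metis
  then obtain KA where KA: "\<And>n f. f \<in> Lp_set p M \<Longrightarrow> A n f \<in> Lp_set p M \<and> lp_norm p M (A n f) \<le> KA n * lp_norm p M f"
    "\<And>n. KA n \<ge> 0"
    by metis
  have HA: "\<And>n f c. f \<in> Lp_set p M \<Longrightarrow> A n (\<lambda>w. c * f w) = (\<lambda>w. c * A n f w)"
    using bA unfolding bounded_op_def by blast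
  let ?K = "Kp + (\<Sum>n<N. cmod (z - z0) ^ n * KA n)"
  have bnd: "Dop \<phi> A z0 z N g \<in> Lp_set p M \<and> lp_norm p M (Dop \<phi> A z0 z N g) \<le> ?K * lp_norm p M g"
    if g: "g \<in> Lp_set p M" for g
  proof -
    have t: "(\<lambda>w. (z - z0) ^ n * A n g w) \<in> Lp_set p M \<and> lp_norm p M (\<lambda>w. (z - z0) ^ n * A n g w) \<le> cmod (z - z0) ^ n * KA n * lp_norm p M g" for n
    proof -
      have "lp_norm p M (\<lambda>w. (z - z0) ^ n * A n g w) = cmod (z - z0) ^ n * lp_norm p M (A n g)"
        using Lp_scale[of "A n g" p M "(z - z0) ^ n"] KA(1)[OF g] p0 by (simp add: norm_power)
      also have "\<dots> \<le> cmod (z - z0) ^ n * (KA n * lp_norm p M g)"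
        using KA(1)[OF g] by (intro mult_left_mono) auto
      finally show ?thesis using Lp_scale[of "A n g" p M "(z - z0) ^ n"] KA(1)[OF g] p0 by simp
    qed
    have s: "(\<lambda>w. \<Sum>n<N. (z - z0) ^ n * A n g w) \<in> Lp_set p M \<and>
        lp_norm p M (\<lambda>w. \<Sum>n<N. (z - z0) ^ n * A n g w) \<le> (\<Sum>n<N. lp_norm p M (\<lambda>w. (z - z0) ^ n * A n g w))"
      using Lp_sum[of "{..<N}" "\<lambda>n w. (z - z0) ^ n * A n g w" p M] t p by auto
    have s2: "(\<Sum>n<N. lp_norm p M (\<lambda>w. (z - z0) ^ n * A n g w)) \<le> (\<Sum>n<N. cmod (z - z0) ^ n * KA n) * lp_norm p M g"
      unfolding sum_distrib_right using t by (intro sum_mono) auto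
    have "Dop \<phi> A z0 z N g = (\<lambda>w. \<phi> z g w - (\<Sum>n<N. (z - z0) ^ n * A n g w))" by (simp add: Dop_def)
    with Lp_diff[of "\<phi> z g" p M "\<lambda>w. \<Sum>n<N. (z - z0) ^ n * A n g w"] Kp(1)[OF g] s s2 p
    show ?thesis by (auto simp: distrib_right)
  qed
  have hom: "Dop \<phi> A z0 z N (\<lambda>w. c * g w) = (\<lambda>w. c * Dop \<phi> A z0 z N g w)" if g: "g \<in> Lp_set p M" for g c
    unfolding Dop_def using Kp(2)[OF g] HA[OF g]
    by (simp add: sum_distrib_left algebra_simps right_diff_distrib)
  show "Dop \<phi> A z0 z N f \<in> Lp_set p M" using bnd[OF f] by simp
  show "lp_norm p M (Dop \<phi> A z0 z N f) \<le> op_norm p M (Dop \<phi> A z0 z N) * lp_norm p M f"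
    by (rule op_bound[OF p0 bnd hom f])
qed

lemma coeff_bound:
  assumes p: "p \<ge> 1" and r: "r > 0"
    and bphi: "\<And>z. z \<in> ball z0 r \<Longrightarrow> bounded_op p M (\<phi> z)" and bA: "\<And>n. bounded_op p M (A n)"
    and conv: "\<And>z. z \<in> ball z0 r \<Longrightarrow> (\<lambda>N. op_norm p M (Dop \<phi> A z0 z N)) \<longlonglongrightarrow> 0"
  shows "\<exists>B\<ge>0. \<forall>n. \<forall>f\<in>Lp_set p M. (r/2) ^ n * lp_norm p M (A n f) \<le> B * lp_norm p M f"
proof -
  have p0: "p > 0" using p by auto
  define z1 where "z1 = z0 + complex_of_real (r/2)"
  have z1: "z1 \<in> ball z0 r" using r by (simp add: z1_def dist_norm)
  have "eventually (\<lambda>N. op_norm p M (Dop \<phi> A z0 z1 N) < 1) sequentially"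
    using order_tendstoD(2)[OF conv[OF z1]] by simp
  then obtain N0 where N0: "\<And>N. N \<ge> N0 \<Longrightarrow> op_norm p M (Dop \<phi> A z0 z1 N) < 1"
    by (auto simp: eventually_sequentially)
  have "\<forall>n. \<exists>K. (\<forall>f\<in>Lp_set p M. A n f \<in> Lp_set p M \<and> lp_norm p M (A n f) \<le> K * lp_norm p M f) \<and> K \<ge> 0"
    using bounded_opE[OF bA] by metis
  then obtain KA where KA: "\<And>n f. f \<in> Lp_set p M \<Longrightarrow> A n f \<in> Lp_set p M \<and> lp_norm p M (A n f) \<le> KA n * lp_norm p M f"
    "\<And>n. KA n \<ge> 0"
    by metis
  define B where "B = 2 + (\<Sum>n<N0. (r/2) ^ n * KA n)"
  have B0: "B \<ge> 0" unfolding B_def using KA(2) r by (intro add_nonneg_nonneg sum_nonneg) auto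
  have "(r/2) ^ n * lp_norm p M (A n f) \<le> B * lp_norm p M f" if f: "f \<in> Lp_set p M" for n f
  proof (cases "n < N0")
    case True
    have "(r/2) ^ n * lp_norm p M (A n f) \<le> (r/2) ^ n * (KA n * lp_norm p M f)"
      using KA(1)[OF f] r by (intro mult_left_mono) auto
    also have "\<dots> = ((r/2) ^ n * KA n) * lp_norm p M f" by simp
    also have "\<dots> \<le> B * lp_norm p M f"
    proof (intro mult_right_mono lp_norm_nonneg)
      have "(r/2) ^ n * KA n \<le> (\<Sum>n<N0. (r/2) ^ n * KA n)"
        using True KA(2) r by (intro member_le_sum) auto
      thus "(r/2) ^ n * KA n \<le> B" by (simp add: B_def)
    qed
    finally show ?thesis .
  next
    case False
    let ?s = "lp_norm p M f"
    have d: "\<And>N. N \<ge> N0 \<Longrightarrow> lp_norm p M (Dop \<phi> A z0 z1 N f) \<le> ?s"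
    proof -
      fix N assume "N \<ge> N0"
      have "lp_norm p M (Dop \<phi> A z0 z1 N f) \<le> op_norm p M (Dop \<phi> A z0 z1 N) * ?s"
        by (rule D_bound(2)[where \<phi>=\<phi> and z=z1 and A=A, OF p bphi[OF z1] bA f])
      also have "\<dots> \<le> 1 * ?s" using N0[OF \<open>N \<ge> N0\<close>] lp_norm_nonneg[of p M f]
        by (intro mult_right_mono) auto
      finally show "lp_norm p M (Dop \<phi> A z0 z1 N f) \<le> ?s" by simp
    qed
    have eq: "(\<lambda>w. complex_of_real ((r/2) ^ n) * A n f w) = (\<lambda>w. Dop \<phi> A z0 z1 n f w - Dop \<phi> A z0 z1 (Suc n) f w) "
      by (auto simp: Dop_def z1_def)
    have "(r/2) ^ n * lp_norm p M (A n f) = lp_norm p M (\<lambda>w. complex_of_real ((r/2) ^ n) * A n f w)"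
      using Lp_scale[of "A n f" p M "complex_of_real ((r/2) ^ n)"] KA(1)[OF f] p0 r by (simp add: norm_power)
    also have "\<dots> \<le> lp_norm p M (Dop \<phi> A z0 z1 n f) + lp_norm p M (Dop \<phi> A z0 z1 (Suc n) f)"
      unfolding eq by (rule Lp_diff(2)[OF D_bound(1)[where \<phi>=\<phi> and z=z1 and A=A, OF p bphi[OF z1] bA f] D_bound(1)[where \<phi>=\<phi> and z=z1 and A=A, OF p bphi[OF z1] bA f] p])
    also have "\<dots> \<le> 2 * ?s" using d[of n] d[of "Suc n"] False by simp
    also have "\<dots> \<le> B * ?s" using lp_norm_nonneg[of p M f] KA(2) r
      by (intro mult_right_mono) (auto simp: B_def intro!: sum_nonneg)
    finally show ?thesis .
  qed
  thus ?thesis using B0 by blast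
qed



declare of_real_sum[simp del]

lemma enn_le1: "ennreal x \<le> Q \<Longrightarrow> Q \<noteq> \<infinity> \<Longrightarrow> x \<ge> 0 \<Longrightarrow> x \<le> enn2real Q"
proof -
  assume a: "ennreal x \<le> Q" "Q \<noteq> \<infinity>" "x \<ge> 0"
  have "enn2real (ennreal x) \<le> enn2real Q" using a by (intro enn2real_mono) (auto simp: top.not_eq_extremum)
  thus ?thesis using a by simp
qed
lemma enn_le2: "x \<le> enn2real Q \<Longrightarrow> Q \<noteq> \<infinity> \<Longrightarrow> ennreal x \<le> Q"
proof -
  assume a: "x \<le> enn2real Q" "Q \<noteq> \<infinity>"
  have "ennreal x \<le> ennreal (enn2real Q)" using a(1) by (rule ennreal_leI)
  also have "\<dots> = Q" using a by (simp add: ennreal_enn2real_if)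
  finally show ?thesis .
qed

lemma G_construct:
  fixes a :: "nat \<Rightarrow> 'a \<Rightarrow> real"
  assumes p: "p \<ge> 1"
    and am[measurable]: "\<And>n. a n \<in> borel_measurable M"
    and a0: "\<And>n w. a n w \<ge> 0"
    and PN: "\<And>N. (\<lambda>w. complex_of_real (\<Sum>n<N. a n w)) \<in> Lp_set p M"
    and Pb: "\<And>N. lp_norm p M (\<lambda>w. complex_of_real (\<Sum>n<N. a n w)) \<le> Cst"
    and C0: "Cst \<ge> 0"
  shows "\<exists>H\<in>sets M. (AE w in M. w \<in> H) \<and> (\<forall>w\<in>H. summable (\<lambda>n. a n w)) \<and>
     (\<lambda>w. complex_of_real (indicator H w * suminf (\<lambda>n. a n w))) \<in> Lp_set p M \<and>
     lp_norm p M (\<lambda>w. complex_of_real (indicator H w * suminf (\<lambda>n. a n w))) \<le> Cst"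
proof -
  have p0: "p > 0" using p by auto
  define P where "P N w = (\<Sum>n<N. a n w)" for N w
  have P0: "P N w \<ge> 0" for N w unfolding P_def using a0 by (intro sum_nonneg) auto
  have Pm[measurable]: "P N \<in> borel_measurable M" for N unfolding P_def by measurable
  have Pinc: "P N w \<le> P (Suc N) w" for N w unfolding P_def using a0[of N w] by simp
  have Pmono: "P N w \<le> P N' w" if "N \<le> N'" for N N' w
    using that by (induction rule: dec_induct) (auto intro: order_trans[OF _ Pinc])
  have intP: "integrable M (\<lambda>w. P N w powr p)" for N
    using PN[of N] P0 by (auto simp: Lp_set_def P_def)
  have intPb: "(\<integral>w. P N w powr p \<partial>M) \<le> Cst powr p" for N
  proof -
    have "(\<integral>w. P N w powr p \<partial>M) = lp_norm p M (\<lambda>w. complex_of_real (P N w)) powr p"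
      using lp_norm_pow[OF PN[of N] p0] P0 by (simp add: P_def)
    also have "\<dots> \<le> Cst powr p" using Pb[of N] p0 by (intro powr_mono2) (auto simp: P_def lp_norm_nonneg)
    finally show ?thesis .
  qed
  define Q where "Q w = (SUP N. ennreal (P N w powr p))" for w
  have Qm[measurable]: "Q \<in> borel_measurable M" unfolding Q_def by measurable
  have "(\<integral>\<^sup>+w. Q w \<partial>M) = (SUP N. \<integral>\<^sup>+w. ennreal (P N w powr p) \<partial>M)"
    unfolding Q_def
  proof (rule nn_integral_monotone_convergence_SUP)
    show "incseq (\<lambda>N w. ennreal (P N w powr p))"
      by (auto simp: incseq_def le_fun_def intro!: ennreal_leI powr_mono2 Pmono P0 less_imp_le[OF p0])
  qed measurable
  also have "\<dots> \<le> ennreal (Cst powr p)"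
  proof (rule SUP_least)
    fix N
    have "(\<integral>\<^sup>+w. ennreal (P N w powr p) \<partial>M) = ennreal (\<integral>w. P N w powr p \<partial>M)"
      by (rule nn_integral_eq_integral[OF intP]) auto
    also have "\<dots> \<le> ennreal (Cst powr p)" using intPb by (intro ennreal_leI) auto
    finally show "(\<integral>\<^sup>+w. ennreal (P N w powr p) \<partial>M) \<le> ennreal (Cst powr p)" .
  qed
  finally have Qint: "(\<integral>\<^sup>+w. Q w \<partial>M) \<le> ennreal (Cst powr p)" .
  hence "(\<integral>\<^sup>+w. Q w \<partial>M) \<noteq> \<infinity>" by (auto simp: top_unique)
  hence AEQ: "AE w in M. Q w \<noteq> \<infinity>" by (intro nn_integral_PInf_AE) auto
  define H where "H = {w \<in> space M. Q w \<noteq> \<infinity>}"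
  have Hs: "H \<in> sets M" unfolding H_def by measurable
  have AEH: "AE w in M. w \<in> H" using AEQ by (auto simp: H_def elim!: eventually_mono)
  have Pbound: "P N w \<le> enn2real (Q w) powr (1/p)" if "w \<in> H" for w N
  proof -
    have "ennreal (P N w powr p) \<le> Q w" unfolding Q_def by (rule SUP_upper) auto
    hence "P N w powr p \<le> enn2real (Q w)" using that by (intro enn_le1) (auto simp: H_def)
    hence "(P N w powr p) powr (1/p) \<le> enn2real (Q w) powr (1/p)" using p0 by (intro powr_mono2) auto
    thus ?thesis using P0[of N w] p0 by (simp add: powr_powr)
  qed
  have summ: "summable (\<lambda>n. a n w)" if "w \<in> H" for w
    using Pbound[OF that] a0 by (intro summableI_nonneg_bounded[where x="enn2real (Q w) powr (1/p)"]) (auto simp: P_def)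
  define G where "G w = indicator H w * suminf (\<lambda>n. a n w)" for w
  have G0: "G w \<ge> 0" for w unfolding G_def using a0 by (auto simp: indicator_def intro: suminf_nonneg summ)
  have Gm[measurable]: "G \<in> borel_measurable M"
  proof (rule borel_measurable_LIMSEQ_metric[where f = "\<lambda>N w. indicator H w * P N w"])
    show "(\<lambda>w. indicator H w * P N w) \<in> borel_measurable M" for N using Hs by measurable
    show "(\<lambda>N. indicator H w * P N w) \<longlonglongrightarrow> G w" for w
      unfolding G_def P_def by (cases "w \<in> H") (auto intro: tendsto_mult_left summable_LIMSEQ summ)
  qed
  have GQ: "ennreal (G w powr p) \<le> Q w" for w
  proof (cases "w \<in> H")
    case True
    have "G w \<le> enn2real (Q w) powr (1/p)" unfolding G_def using True
      by (auto intro!: suminf_le_const summ simp: Pbound[OF True, unfolded P_def])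
    hence "G w powr p \<le> (enn2real (Q w) powr (1/p)) powr p" using G0[of w] p0 by (intro powr_mono2) auto
    also have "\<dots> = enn2real (Q w)" using p0 by (simp add: powr_powr)
    finally show ?thesis using True by (intro enn_le2) (auto simp: H_def)
  next
    case False
    thus ?thesis by (simp add: G_def)
  qed
  have "(\<integral>\<^sup>+w. ennreal (G w powr p) \<partial>M) \<le> (\<integral>\<^sup>+w. Q w \<partial>M)" by (intro nn_integral_mono GQ)
  also note Qint
  finally have Gint: "(\<integral>\<^sup>+w. ennreal (G w powr p) \<partial>M) \<le> ennreal (Cst powr p)" .
  have Gi: "integrable M (\<lambda>w. G w powr p)"
    by (rule integrableI_bounded) (use Gint in \<open>auto simp: top_unique less_top[symmetric] intro: le_less_trans\<close>)
  have GL: "(\<lambda>w. complex_of_real (G w)) \<in> Lp_set p M" using Gi G0 by (simp add: Lp_set_def)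
  have "ennreal (\<integral>w. G w powr p \<partial>M) \<le> ennreal (Cst powr p)"
    using Gint nn_integral_eq_integral[OF Gi] by simp
  hence "(\<integral>w. G w powr p \<partial>M) \<le> Cst powr p" by (simp add: ennreal_le_iff)
  hence "lp_norm p M (\<lambda>w. complex_of_real (G w)) \<le> Cst" using G0 p0 C0 by (intro lp_norm_via_pow) auto
  thus ?thesis using Hs AEH summ GL by (auto simp: G_def)
qed



lemma geom_half_sum: "(\<Sum>n<N. (1/2::real) ^ n) \<le> 2"
proof -
  have "(\<Sum>n<N. (1/2::real) ^ n) \<le> (\<Sum>n. (1/2::real) ^ n)"
    by (intro sum_le_suminf summable_geometric) auto
  also have "\<dots> = 2" using suminf_geometric[of "1/2::real"] by simp
  finally show ?thesis .
qed

lemma piece: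
  fixes \<phi> :: "complex \<Rightarrow> ('a \<Rightarrow> complex) \<Rightarrow> ('a \<Rightarrow> complex)" and c :: "real \<Rightarrow> complex"
  assumes p: "p \<ge> 1" and r: "r > 0"
    and bphi: "\<And>z. z \<in> ball z0 r \<Longrightarrow> bounded_op p M (\<phi> z)" and bA: "\<And>n. bounded_op p M (A n)"
    and conv: "\<And>z. z \<in> ball z0 r \<Longrightarrow> (\<lambda>N. op_norm p M (Dop \<phi> A z0 z N)) \<longlonglongrightarrow> 0"
    and cm[measurable]: "c \<in> borel_measurable lborel" and cb: "\<And>t. cmod (c t) \<le> r/4"
  shows "\<exists>K\<ge>0. \<forall>x\<in>Lp_set p M. \<exists>F G. (\<lambda>(t,w). F t w) \<in> borel_measurable (lborel \<Otimes>\<^sub>M M) \<and>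
           G \<in> Lp_set p M \<and> lp_norm p M G \<le> K * lp_norm p M x \<and>
           (\<forall>t w. cmod (F t w) \<le> cmod (G w)) \<and> (\<forall>t. AE w in M. F t w = \<phi> (z0 + c t) x w)"
proof -
  have p0: "p > 0" using p by auto
  obtain B where B0: "B \<ge> 0" and B: "\<And>n f. f \<in> Lp_set p M \<Longrightarrow> (r/2) ^ n * lp_norm p M (A n f) \<le> B * lp_norm p M f"
    using coeff_bound[OF p r bphi bA conv] by blast
  have main: "\<exists>F G. (\<lambda>(t,w). F t w) \<in> borel_measurable (lborel \<Otimes>\<^sub>M M) \<and>
           G \<in> Lp_set p M \<and> lp_norm p M G \<le> (2 * B) * lp_norm p M x \<and>
           (\<forall>t w. cmod (F t w) \<le> cmod (G w)) \<and> (\<forall>t. AE w in M. F t w = \<phi> (z0 + c t) x w)"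
    if x: "x \<in> Lp_set p M" for x
  proof -
    let ?s = "lp_norm p M x"
    have s0: "?s \<ge> 0" by (rule lp_norm_nonneg)
    have AL: "A n x \<in> Lp_set p M" for n using bA[of n] x by (auto simp: bounded_op_def)
    have Am[measurable]: "A n x \<in> borel_measurable M" for n using AL[of n] by (simp add: Lp_set_def)
    define \<rho> where "\<rho> = r/4"
    have \<rho>0: "\<rho> > 0" using r by (simp add: \<rho>_def)
    define a where "a n w = \<rho> ^ n * cmod (A n x w)" for n w
    have a0: "a n w \<ge> 0" for n w using \<rho>0 by (simp add: a_def)
    have am[measurable]: "a n \<in> borel_measurable M" for n unfolding a_def by measurable
    have trm: "(\<lambda>w. complex_of_real (a n w)) \<in> Lp_set p M \<and> lp_norm p M (\<lambda>w. complex_of_real (a n w)) \<le> (1/2) ^ n * B * ?s" for n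
    proof -
      have sc: "(\<lambda>w. complex_of_real (\<rho> ^ n) * A n x w) \<in> Lp_set p M"
        "lp_norm p M (\<lambda>w. complex_of_real (\<rho> ^ n) * A n x w) = \<rho> ^ n * lp_norm p M (A n x)"
        using Lp_scale[OF AL p0, of "complex_of_real (\<rho> ^ n)"] \<rho>0 by (auto simp: norm_power)
      have nm: "cmod (complex_of_real (a n w)) \<le> cmod (complex_of_real (\<rho> ^ n) * A n x w)" for w
        using \<rho>0 by (simp add: a_def norm_mult norm_power)
      have mem: "(\<lambda>w. complex_of_real (a n w)) \<in> Lp_set p M"
        by (rule Lp_mono(1)[OF sc(1) _ p0]) (use nm in auto)
      have "lp_norm p M (\<lambda>w. complex_of_real (a n w)) \<le> \<rho> ^ n * lp_norm p M (A n x)"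
        using Lp_mono(2)[OF sc(1) _ p0] nm sc(2) by auto
      also have "\<dots> = (1/2) ^ n * ((r/2) ^ n * lp_norm p M (A n x))"
        by (simp add: \<rho>_def power_mult_distrib[symmetric])
      also have "\<dots> \<le> (1/2) ^ n * (B * ?s)" by (intro mult_left_mono B x) auto
      finally show ?thesis using mem by simp
    qed
    have PN: "(\<lambda>w. complex_of_real (\<Sum>n<N. a n w)) \<in> Lp_set p M \<and>
              lp_norm p M (\<lambda>w. complex_of_real (\<Sum>n<N. a n w)) \<le> 2 * B * ?s" for N
    proof -
      have "(\<lambda>w. \<Sum>n<N. complex_of_real (a n w)) \<in> Lp_set p M \<and>
        lp_norm p M (\<lambda>w. \<Sum>n<N. complex_of_real (a n w)) \<le> (\<Sum>n<N. lp_norm p M (\<lambda>w. complex_of_real (a n w)))"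
        by (rule Lp_sum) (use trm p in auto)
      moreover have "(\<Sum>n<N. lp_norm p M (\<lambda>w. complex_of_real (a n w))) \<le> (\<Sum>n<N. (1/2) ^ n) * (B * ?s)"
        unfolding sum_distrib_right using trm by (intro sum_mono) (auto simp: mult.assoc)
      moreover have "(\<Sum>n<N. (1/2::real) ^ n) * (B * ?s) \<le> 2 * (B * ?s)"
        using B0 s0 by (intro mult_right_mono geom_half_sum) auto
      ultimately show ?thesis by (simp add: of_real_sum)
    qed
    obtain H where Hs: "H \<in> sets M" and AEH: "AE w in M. w \<in> H" and summ: "\<And>w. w \<in> H \<Longrightarrow> summable (\<lambda>n. a n w)"
      and GL: "(\<lambda>w. complex_of_real (indicator H w * suminf (\<lambda>n. a n w))) \<in> Lp_set p M"
      and Gn: "lp_norm p M (\<lambda>w. complex_of_real (indicator H w * suminf (\<lambda>n. a n w))) \<le> 2 * B * ?s"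
      using G_construct[where a=a and Cst="2 * B * ?s" and M=M and p=p, OF p am a0] PN B0 s0 by auto
    define G where "G w = complex_of_real (indicator H w * suminf (\<lambda>n. a n w))" for w
    define F where "F t w = complex_of_real (indicator H w) * (\<Sum>n. c t ^ n * A n x w)" for t w
    have nsumm: "summable (\<lambda>n. norm (c t ^ n * A n x w))" if "w \<in> H" for t w
    proof (rule summable_norm_comparison_test[OF _ summ[OF that]])
      show "\<exists>N. \<forall>n\<ge>N. norm (c t ^ n * A n x w) \<le> a n w"
        using cb[of t] by (auto simp: a_def norm_mult norm_power \<rho>_def intro!: mult_right_mono power_mono)
    qed
    have Fb: "cmod (F t w) \<le> cmod (G w)" for t w
    proof (cases "w \<in> H")
      case True
      have "cmod (F t w) = cmod (\<Sum>n. c t ^ n * A n x w)" using True by (simp add: F_def)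
      also have "\<dots> \<le> (\<Sum>n. norm (c t ^ n * A n x w))" by (rule summable_norm[OF nsumm[OF True]])
      also have "\<dots> \<le> (\<Sum>n. a n w)"
        using cb[of t] by (intro suminf_le nsumm[OF True] summ[OF True])
          (auto simp: a_def norm_mult norm_power \<rho>_def intro!: mult_right_mono power_mono)
      also have "\<dots> = cmod (G w)" using True a0 summ[OF True] by (simp add: G_def suminf_nonneg)
      finally show ?thesis .
    next
      case False thus ?thesis by (simp add: F_def)
    qed
    have Fm: "(\<lambda>(t,w). F t w) \<in> borel_measurable (lborel \<Otimes>\<^sub>M M)"
    proof (rule borel_measurable_LIMSEQ_metric[where f = "\<lambda>N (t,w). complex_of_real (indicator H w) * (\<Sum>n<N. c t ^ n * A n x w)"])
      show "(\<lambda>(t,w). complex_of_real (indicator H w) * (\<Sum>n<N. c t ^ n * A n x w)) \<in> borel_measurable (lborel \<Otimes>\<^sub>M M)" for N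
        using Hs by measurable
      show "(\<lambda>N. (\<lambda>(t,w). complex_of_real (indicator H w) * (\<Sum>n<N. c t ^ n * A n x w)) tw) \<longlonglongrightarrow> (\<lambda>(t,w). F t w) tw" for tw
      proof (cases tw)
        case (Pair t w)
        show ?thesis
        proof (cases "w \<in> H")
          case True
          thus ?thesis unfolding Pair F_def
            by (auto intro!: tendsto_mult_left summable_LIMSEQ summable_norm_cancel nsumm)
        next
          case False thus ?thesis unfolding Pair F_def by simp
        qed
      qed
    qed
    have Ftm[measurable]: "F t \<in> borel_measurable M" for t
      using measurable_Pair2[OF Fm, of t] by simp
    have AEeq: "AE w in M. F t w = \<phi> (z0 + c t) x w" for t
    proof -
      define z where "z = z0 + c t"
      have z: "z \<in> ball z0 r" using cb[of t] r by (simp add: z_def dist_norm)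
      have hL: "\<phi> z x \<in> Lp_set p M" using bphi[OF z] x by (auto simp: bounded_op_def)
      have hm[measurable]: "\<phi> z x \<in> borel_measurable M" using hL by (simp add: Lp_set_def)
      define E where "E N = lp_norm p M (Dop \<phi> A z0 z N x)" for N
      have DL: "Dop \<phi> A z0 z N x \<in> Lp_set p M" for N by (rule D_bound(1)[where \<phi>=\<phi> and z=z and A=A, OF p bphi[OF z] bA x])
      have Dm[measurable]: "Dop \<phi> A z0 z N x \<in> borel_measurable M" for N using DL[of N] by (simp add: Lp_set_def)
      have E0: "E \<longlonglongrightarrow> 0"
      proof (rule tendsto_sandwich[where f = "\<lambda>_. 0" and h = "\<lambda>N. op_norm p M (Dop \<phi> A z0 z N) * ?s"])
        show "\<forall>\<^sub>F N in sequentially. 0 \<le> E N" by (simp add: E_def lp_norm_nonneg)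
        show "\<forall>\<^sub>F N in sequentially. E N \<le> op_norm p M (Dop \<phi> A z0 z N) * ?s"
          unfolding E_def by (intro always_eventually allI D_bound(2)[where \<phi>=\<phi> and z=z and A=A, OF p bphi[OF z] bA x])
        show "(\<lambda>N. op_norm p M (Dop \<phi> A z0 z N) * ?s) \<longlonglongrightarrow> 0"
          using tendsto_mult_left_zero[OF conv[OF z], of ?s] by simp
      qed simp
      have Ep: "(\<lambda>N. E N powr p) \<longlonglongrightarrow> 0"
        using tendsto_powr'[OF E0 tendsto_const[of p]] p0
        by (simp add: E_def lp_norm_nonneg)
      have Dw: "Dop \<phi> A z0 z N x w = \<phi> z x w - (\<Sum>n<N. c t ^ n * A n x w)" for N w
        by (simp add: Dop_def z_def)
      have lim_pt: "liminf (\<lambda>N. ennreal (cmod (Dop \<phi> A z0 z N x w) powr p)) = ennreal (cmod (\<phi> z x w - F t w) powr p)"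
        if "w \<in> H" for w
      proof (rule lim_imp_Liminf)
        have "(\<lambda>N. Dop \<phi> A z0 z N x w) \<longlonglongrightarrow> \<phi> z x w - F t w"
          unfolding Dw using that unfolding F_def
          by (auto intro!: tendsto_diff summable_LIMSEQ summable_norm_cancel nsumm)
        hence "(\<lambda>N. cmod (Dop \<phi> A z0 z N x w) powr p) \<longlonglongrightarrow> cmod (\<phi> z x w - F t w) powr p"
          using p0 by (intro tendsto_powr' tendsto_norm) auto
        thus "(\<lambda>N. ennreal (cmod (Dop \<phi> A z0 z N x w) powr p)) \<longlonglongrightarrow> ennreal (cmod (\<phi> z x w - F t w) powr p)"
          by (rule tendsto_ennrealI)
      qed simp
      have "(\<integral>\<^sup>+w. ennreal (cmod (\<phi> z x w - F t w) powr p) \<partial>M) \<le> (\<integral>\<^sup>+w. liminf (\<lambda>N. ennreal (cmod (Dop \<phi> A z0 z N x w) powr p)) \<partial>M)"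
        using AEH by (intro nn_integral_mono_AE) (auto elim!: eventually_mono simp: lim_pt)
      also have "\<dots> \<le> liminf (\<lambda>N. \<integral>\<^sup>+w. ennreal (cmod (Dop \<phi> A z0 z N x w) powr p) \<partial>M)"
        by (rule nn_integral_liminf) measurable
      also have "(\<lambda>N. \<integral>\<^sup>+w. ennreal (cmod (Dop \<phi> A z0 z N x w) powr p) \<partial>M) = (\<lambda>N. ennreal (E N powr p))"
      proof
        fix N
        have "(\<integral>\<^sup>+w. ennreal (cmod (Dop \<phi> A z0 z N x w) powr p) \<partial>M) = ennreal (\<integral>w. cmod (Dop \<phi> A z0 z N x w) powr p \<partial>M)"
          using DL[of N] by (intro nn_integral_eq_integral) (auto simp: Lp_set_def)
        also have "\<dots> = ennreal (E N powr p)" using lp_norm_pow[OF DL[of N] p0] by (simp add: E_def)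
        finally show "(\<integral>\<^sup>+w. ennreal (cmod (Dop \<phi> A z0 z N x w) powr p) \<partial>M) = ennreal (E N powr p)" .
      qed
      also have "liminf (\<lambda>N. ennreal (E N powr p)) = 0"
        using lim_imp_Liminf[OF _ tendsto_ennrealI[OF Ep]] by simp
      finally have "(\<integral>\<^sup>+w. ennreal (cmod (\<phi> z x w - F t w) powr p) \<partial>M) = 0" by simp
      hence "AE w in M. ennreal (cmod (\<phi> z x w - F t w) powr p) = 0"
        by (subst (asm) nn_integral_0_iff_AE) measurable
      thus ?thesis by (auto elim!: eventually_mono simp: z_def)
    qed
    show ?thesis
      apply (rule exI[of _ F], rule exI[of _ G])
      using Fm GL Gn Fb AEeq by (auto simp: G_def[abs_def])
  qed
  show ?thesis using main B0 by (intro exI[of _ "2 * B"]) auto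
qed



lemma interval_index:
  fixes t :: real and k :: nat
  assumes "k > 0" "0 \<le> t" "t < 1"
  shows "nat \<lfloor>t * k\<rfloor> < k" "t \<in> {real (nat \<lfloor>t * k\<rfloor>) / k ..< real (Suc (nat \<lfloor>t * k\<rfloor>)) / k}"
proof -
  have tk: "0 \<le> t * k" "t * k < k" using assms by (auto simp: mult_less_cancel_right2)
  have fl: "real (nat \<lfloor>t * k\<rfloor>) = of_int \<lfloor>t * k\<rfloor>" using tk by simp
  have "of_int \<lfloor>t * k\<rfloor> \<le> t * k" "t * k < of_int \<lfloor>t * k\<rfloor> + 1" by linarith+
  hence a: "real (nat \<lfloor>t * k\<rfloor>) \<le> t * k" "t * k < real (nat \<lfloor>t * k\<rfloor>) + 1" using fl by auto
  show "nat \<lfloor>t * k\<rfloor> < k" using a tk by linarith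
  show "t \<in> {real (nat \<lfloor>t * k\<rfloor>) / k ..< real (Suc (nat \<lfloor>t * k\<rfloor>)) / k}"
    using a assms by (auto simp: field_simps)
qed

lemma interval_unique:
  fixes t :: real and k :: nat
  assumes "k > 0" "t \<in> {real j / k ..< real (Suc j) / k}" "t \<in> {real j' / k ..< real (Suc j') / k}"
  shows "j = j'"
proof -
  have "real j \<le> t * k" "t * k < real j + 1" "real j' \<le> t * k" "t * k < real j' + 1"
    using assms by (auto simp: field_simps)
  thus ?thesis by linarith
qed



theorem lemma3p1:
  fixes M :: "'a measure" and p :: real and U :: "complex set"
    and \<gamma> :: "real \<Rightarrow> complex"
    and \<phi> :: "complex \<Rightarrow> ('a \<Rightarrow> complex) \<Rightarrow> ('a \<Rightarrow> complex)"
  assumes "1 < p"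
    and "open U"
    and "C1_curve \<gamma>" and "\<gamma> ` {0..1} \<subseteq> U"
    and "analytic_op_on p M U \<phi>"
  shows "\<exists>C\<ge>0. \<forall>x\<in>Lp_set p M. \<exists>F :: real \<Rightarrow> 'a \<Rightarrow> complex.
           (\<lambda>(t, w). F t w) \<in> borel_measurable (lborel \<Otimes>\<^sub>M M) \<and>
           (AE t in lborel. t \<in> {0..1} \<longrightarrow> (AE w in M. F t w = \<phi> (\<gamma> t) x w)) \<and>
           (AE w in M. set_integrable lborel {0..1}
              (\<lambda>t. (cmod (F t w))\<^sup>2 * norm (vector_derivative \<gamma> (at t within {0..1})))) \<and>
           (let S = (\<lambda>w. complex_of_real (sqrt (LINT t:{0..1}|lborel.
                       (cmod (F t w))\<^sup>2 * norm (vector_derivative \<gamma> (at t within {0..1})))))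
            in S \<in> Lp_set p M \<and> lp_norm p M S \<le> C * lp_norm p M x)"
proof -
  note assms(1)[arith]
  have p: "p \<ge> 1" and p0: "p > 0" using assms(1) by auto
  obtain D where Dd: "\<And>t. t \<in> {0..1} \<Longrightarrow> (\<gamma> has_vector_derivative D t) (at t within {0..1})"
    and Dc: "continuous_on {0..1} D"
    using assms(3) unfolding C1_curve_def by blast
  have gc: "continuous_on {0..1} \<gamma>"
    unfolding continuous_on_eq_continuous_within using Dd has_vector_derivative_continuous by blast
  have vd: "vector_derivative \<gamma> (at t within {0..1}) = D t" if "t \<in> {0..1}" for t
    by (rule vector_derivative_within_closed_interval[OF _ that Dd[OF that]]) simp
  obtain Md where Md0: "Md > 0" and Md: "\<And>t. t \<in> {0..1} \<Longrightarrow> norm (D t) \<le> Md"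
  proof -
    have "bounded (D ` {0..1})" by (rule compact_imp_bounded compact_continuous_image Dc)+ simp
    thus ?thesis using that unfolding bounded_pos by auto
  qed
  have an: "\<forall>z\<in>U. bounded_op p M (\<phi> z)" and an2: "\<forall>z0\<in>U. \<exists>r>0. ball z0 r \<subseteq> U \<and>
        (\<exists>A. (\<forall>n. bounded_op p M (A n)) \<and> (\<forall>z\<in>ball z0 r. (\<lambda>N. op_norm p M (Dop \<phi> A z0 z N)) \<longlonglongrightarrow> 0))"
    using assms(5) unfolding analytic_op_on_def Dop_def by auto
  have "\<forall>t0\<in>{0..1}. \<exists>r>0. ball (\<gamma> t0) r \<subseteq> U \<and>
        (\<exists>A. (\<forall>n. bounded_op p M (A n)) \<and> (\<forall>z\<in>ball (\<gamma> t0) r. (\<lambda>N. op_norm p M (Dop \<phi> A (\<gamma> t0) z N)) \<longlonglongrightarrow> 0))"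
    using an2 assms(4) by auto
  then obtain R AA where R: "\<And>t0. t0 \<in> {0..1} \<Longrightarrow> R t0 > 0 \<and> ball (\<gamma> t0) (R t0) \<subseteq> U \<and>
        (\<forall>n. bounded_op p M (AA t0 n)) \<and> (\<forall>z\<in>ball (\<gamma> t0) (R t0). (\<lambda>N. op_norm p M (Dop \<phi> (AA t0) (\<gamma> t0) z N)) \<longlonglongrightarrow> 0)"
    by metis
  have "\<forall>t0\<in>{0..1}. \<exists>d>0. \<forall>t\<in>{0..1}. dist t t0 < d \<longrightarrow> dist (\<gamma> t) (\<gamma> t0) < R t0 / 4"
  proof
    fix t0 :: real assume t0: "t0 \<in> {0..1}"
    have "R t0 / 4 > 0" using R[OF t0] by simp
    with gc t0 show "\<exists>d>0. \<forall>t\<in>{0..1}. dist t t0 < d \<longrightarrow> dist (\<gamma> t) (\<gamma> t0) < R t0 / 4"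
      unfolding continuous_on_iff by blast
  qed
  then obtain \<delta> where \<delta>: "\<And>t0. t0 \<in> {0..1} \<Longrightarrow> \<delta> t0 > 0 \<and> (\<forall>t\<in>{0..1}. dist t t0 < \<delta> t0 \<longrightarrow> dist (\<gamma> t) (\<gamma> t0) < R t0 / 4)"
    by metis
  obtain \<epsilon> where \<epsilon>0: "\<epsilon> > 0" and \<epsilon>: "\<And>t. t \<in> {0..1::real} \<Longrightarrow> \<exists>G\<in>(\<lambda>t0. ball t0 (\<delta> t0)) ` {0..1}. ball t \<epsilon> \<subseteq> G"
  proof (rule Heine_Borel_lemma[of "{0..1::real}" "(\<lambda>t0. ball t0 (\<delta> t0)) ` {0..1}"])
    show "{0..1::real} \<subseteq> \<Union> ((\<lambda>t0. ball t0 (\<delta> t0)) ` {0..1})" using \<delta> by force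
  qed auto
  obtain k :: nat where k0: "k > 0" and k: "inverse (real k) < \<epsilon>" using ex_inverse_of_nat_less[OF \<epsilon>0] by auto
  define I where "I j = {real j / k ..< real (Suc j) / k}" for j
  have Isub: "I j \<subseteq> {0..1}" if "j < k" for j
  proof -
    have h1: "real (Suc j) / k \<le> 1" using that k0 by (simp add: divide_le_eq_1)
    have h0: "0 \<le> real j / k" by simp
    show ?thesis
    proof
      fix x assume "x \<in> I j"
      hence "real j / k \<le> x" "x < real (Suc j) / k" unfolding I_def by auto
      thus "x \<in> {0..1}" using h0 h1 by (simp only: atLeastAtMost_iff) linarith
    qed
  qed
  have "\<forall>j. \<exists>t0. j < k \<longrightarrow> t0 \<in> {0..1} \<and> ball (real j / k) \<epsilon> \<subseteq> ball t0 (\<delta> t0)"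
  proof
    fix j
    show "\<exists>t0. j < k \<longrightarrow> t0 \<in> {0..1} \<and> ball (real j / k) \<epsilon> \<subseteq> ball t0 (\<delta> t0)"
    proof (cases "j < k")
      case True
      hence "real j / k \<le> 1" using k0 by (simp add: divide_le_eq_1)
      hence "real j / k \<in> {0..1}" by simp
      thus ?thesis using \<epsilon> by blast
    qed simp
  qed
  then obtain T where T: "\<And>j. j < k \<Longrightarrow> T j \<in> {0..1} \<and> ball (real j / k) \<epsilon> \<subseteq> ball (T j) (\<delta> (T j))"
    by metis
  have Iball: "\<gamma> t \<in> ball (\<gamma> (T j)) (R (T j) / 4)" if "j < k" "t \<in> I j" for j t
  proof -
    have "t \<in> ball (real j / k) \<epsilon>"
    proof -
      have "t - real j / k < 1 / k" using that(2) by (auto simp: I_def add_divide_distrib)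
      thus ?thesis using that(2) k by (auto simp: I_def dist_real_def field_simps)
    qed
    hence "dist t (T j) < \<delta> (T j)" using T[OF that(1)] by (auto simp: dist_commute)
    thus ?thesis using \<delta>[of "T j"] T[OF that(1)] Isub[OF that(1)] that(2) by (auto simp: dist_commute)
  qed
  define c where "c j t = indicator (I j) t *\<^sub>R (\<gamma> t - \<gamma> (T j))" for j t
  have Is: "I j \<in> sets borel" for j by (simp add: I_def)
  have cm: "c j \<in> borel_measurable lborel" if "j < k" for j
  proof -
    have "continuous_on (I j) (\<lambda>t. \<gamma> t - \<gamma> (T j))"
      by (intro continuous_intros continuous_on_subset[OF gc Isub[OF that]])
    from borel_measurable_continuous_on_indicator[OF Is this]
    show ?thesis unfolding c_def by (simp add: measurable_lborel1)
  qed
  have cb: "cmod (c j t) \<le> R (T j) / 4" if "j < k" for j t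
  proof (cases "t \<in> I j")
    case True
    thus ?thesis using Iball[OF that True] by (simp add: c_def dist_norm norm_minus_commute less_imp_le)
  next
    case False
    thus ?thesis using R[of "T j"] T[OF that] by (simp add: c_def less_imp_le)
  qed
  have "\<forall>j. \<exists>K. j < k \<longrightarrow> K \<ge> 0 \<and> (\<forall>x\<in>Lp_set p M. \<exists>F G. (\<lambda>(t,w). F t w) \<in> borel_measurable (lborel \<Otimes>\<^sub>M M) \<and>
           G \<in> Lp_set p M \<and> lp_norm p M G \<le> K * lp_norm p M x \<and>
           (\<forall>t w. cmod (F t w) \<le> cmod (G w)) \<and> (\<forall>t. AE w in M. F t w = \<phi> (\<gamma> (T j) + c j t) x w))"
  proof
    fix j
    show "\<exists>K. j < k \<longrightarrow> K \<ge> 0 \<and> (\<forall>x\<in>Lp_set p M. \<exists>F G. (\<lambda>(t,w). F t w) \<in> borel_measurable (lborel \<Otimes>\<^sub>M M) \<and>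
           G \<in> Lp_set p M \<and> lp_norm p M G \<le> K * lp_norm p M x \<and>
           (\<forall>t w. cmod (F t w) \<le> cmod (G w)) \<and> (\<forall>t. AE w in M. F t w = \<phi> (\<gamma> (T j) + c j t) x w))"
    proof (cases "j < k")
      case True
      have Tj: "T j \<in> {0..1}" using T[OF True] by simp
      note RT = R[OF Tj]
      have "\<exists>K\<ge>0. \<forall>x\<in>Lp_set p M. \<exists>F G. (\<lambda>(t,w). F t w) \<in> borel_measurable (lborel \<Otimes>\<^sub>M M) \<and>
           G \<in> Lp_set p M \<and> lp_norm p M G \<le> K * lp_norm p M x \<and>
           (\<forall>t w. cmod (F t w) \<le> cmod (G w)) \<and> (\<forall>t. AE w in M. F t w = \<phi> (\<gamma> (T j) + c j t) x w)"
      proof (rule piece[OF p])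
        show "R (T j) > 0" using RT by simp
        show "bounded_op p M (\<phi> z)" if "z \<in> ball (\<gamma> (T j)) (R (T j))" for z using RT that an by auto
        show "bounded_op p M (AA (T j) n)" for n using RT by auto
        show "(\<lambda>N. op_norm p M (Dop \<phi> (AA (T j)) (\<gamma> (T j)) z N)) \<longlonglongrightarrow> 0" if "z \<in> ball (\<gamma> (T j)) (R (T j))" for z
          using RT that by auto
        show "c j \<in> borel_measurable lborel" by (rule cm[OF True])
        show "cmod (c j t) \<le> R (T j) / 4" for t by (rule cb[OF True])
      qed
      thus ?thesis by auto
    qed simp
  qed
  from choice[OF this] obtain KK where KKall: "\<forall>j. j < k \<longrightarrow> KK j \<ge> 0 \<and> (\<forall>x\<in>Lp_set p M. \<exists>F G. (\<lambda>(t,w). F t w) \<in> borel_measurable (lborel \<Otimes>\<^sub>M M) \<and>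
           G \<in> Lp_set p M \<and> lp_norm p M G \<le> KK j * lp_norm p M x \<and>
           (\<forall>t w. cmod (F t w) \<le> cmod (G w)) \<and> (\<forall>t. AE w in M. F t w = \<phi> (\<gamma> (T j) + c j t) x w))"
    by blast
  have KK0: "\<And>j. j < k \<Longrightarrow> KK j \<ge> 0" using KKall by blast
  define C where "C = sqrt Md * (\<Sum>j<k. KK j)"
  have C0: "C \<ge> 0" unfolding C_def using KK0 Md0 by (intro mult_nonneg_nonneg sum_nonneg) auto
  define V where "V t = indicator {0..1::real} t * norm (D t)" for t
  have Vm[measurable]: "V \<in> borel_measurable lborel"
  proof -
    have "continuous_on {0..1} (\<lambda>t. norm (D t))" by (intro continuous_intros Dc)
    from borel_measurable_continuous_on_indicator[OF _ this]
    show ?thesis unfolding V_def by (simp add: measurable_lborel1)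
  qed
  have V0: "0 \<le> V t" for t by (simp add: V_def)
  have VM: "V t \<le> indicator {0..1::real} t * Md" for t using Md[of t] by (simp add: V_def indicator_def)
  have Vvd: "indicator {0..1::real} t * norm (vector_derivative \<gamma> (at t within {0..1})) = V t" for t
    by (simp add: V_def indicator_def vd)
  have main: "\<exists>F :: real \<Rightarrow> 'a \<Rightarrow> complex.
           (\<lambda>(t, w). F t w) \<in> borel_measurable (lborel \<Otimes>\<^sub>M M) \<and>
           (AE t in lborel. t \<in> {0..1} \<longrightarrow> (AE w in M. F t w = \<phi> (\<gamma> t) x w)) \<and>
           (AE w in M. set_integrable lborel {0..1}
              (\<lambda>t. (cmod (F t w))\<^sup>2 * norm (vector_derivative \<gamma> (at t within {0..1})))) \<and>
           (let S = (\<lambda>w. complex_of_real (sqrt (LINT t:{0..1}|lborel.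
                       (cmod (F t w))\<^sup>2 * norm (vector_derivative \<gamma> (at t within {0..1})))))
            in S \<in> Lp_set p M \<and> lp_norm p M S \<le> C * lp_norm p M x)" if x: "x \<in> Lp_set p M" for x
  proof -
    have "\<forall>j. \<exists>F G. j < k \<longrightarrow> (\<lambda>(t,w). F t w) \<in> borel_measurable (lborel \<Otimes>\<^sub>M M) \<and>
           G \<in> Lp_set p M \<and> lp_norm p M G \<le> KK j * lp_norm p M x \<and>
           (\<forall>t w. cmod (F t w) \<le> cmod (G w)) \<and> (\<forall>t. AE w in M. F t w = \<phi> (\<gamma> (T j) + c j t) x w)"
      using KKall x by blast
    from choice[OF this] obtain FF where "\<forall>j. \<exists>G. j < k \<longrightarrow> (\<lambda>(t,w). FF j t w) \<in> borel_measurable (lborel \<Otimes>\<^sub>M M) \<and>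
           G \<in> Lp_set p M \<and> lp_norm p M G \<le> KK j * lp_norm p M x \<and>
           (\<forall>t w. cmod (FF j t w) \<le> cmod (G w)) \<and> (\<forall>t. AE w in M. FF j t w = \<phi> (\<gamma> (T j) + c j t) x w)"
      by blast
    from choice[OF this] obtain GG where FG: "\<forall>j. j < k \<longrightarrow> (\<lambda>(t,w). FF j t w) \<in> borel_measurable (lborel \<Otimes>\<^sub>M M) \<and>
           GG j \<in> Lp_set p M \<and> lp_norm p M (GG j) \<le> KK j * lp_norm p M x \<and>
           (\<forall>t w. cmod (FF j t w) \<le> cmod (GG j w)) \<and> (\<forall>t. AE w in M. FF j t w = \<phi> (\<gamma> (T j) + c j t) x w)"
      by blast
    define F where "F t w = (\<Sum>j<k. complex_of_real (indicator (I j) t) * FF j t w)" for t w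
    define g where "g w = (\<Sum>j<k. cmod (GG j w))" for w
    have g0: "g w \<ge> 0" for w by (simp add: g_def sum_nonneg)
    have Fb: "cmod (F t w) \<le> g w" for t w
    proof -
      have "cmod (F t w) \<le> (\<Sum>j<k. cmod (complex_of_real (indicator (I j) t) * FF j t w))"
        unfolding F_def by (rule norm_sum)
      also have "\<dots> \<le> g w" unfolding g_def
        using FG by (intro sum_mono) (auto simp: indicator_def)
      finally show ?thesis .
    qed
    have Fm: "(\<lambda>(t,w). F t w) \<in> borel_measurable (lborel \<Otimes>\<^sub>M M)"
    proof -
      have "(\<lambda>tw. \<Sum>j<k. complex_of_real (indicator (I j) (fst tw)) * (\<lambda>(t,w). FF j t w) tw) \<in> borel_measurable (lborel \<Otimes>\<^sub>M M)"
      proof (rule borel_measurable_sum)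
        fix j assume "j \<in> {..<k}"
        hence FFm[measurable]: "(\<lambda>(t,w). FF j t w) \<in> borel_measurable (lborel \<Otimes>\<^sub>M M)" using FG by auto
        have Ism[measurable]: "I j \<in> sets lborel" using Is[of j] by simp
        show "(\<lambda>tw. complex_of_real (indicator (I j) (fst tw)) * (\<lambda>(t,w). FF j t w) tw) \<in> borel_measurable (lborel \<Otimes>\<^sub>M M)"
          by measurable
      qed
      thus ?thesis by (simp add: F_def case_prod_beta)
    qed
    have AEF: "AE t in lborel. t \<in> {0..1} \<longrightarrow> (AE w in M. F t w = \<phi> (\<gamma> t) x w)"
      using AE_lborel_singleton[of 1]
    proof (rule eventually_mono)
      fix t :: real assume t1: "t \<noteq> 1"
      show "t \<in> {0..1} \<longrightarrow> (AE w in M. F t w = \<phi> (\<gamma> t) x w)"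
      proof
        assume t: "t \<in> {0..1}"
        define j where "j = nat \<lfloor>t * k\<rfloor>"
        have tl: "0 \<le> t" "t < 1" using t t1 by auto
        have j: "j < k" "t \<in> I j" using interval_index[OF k0 tl] by (auto simp: j_def I_def)
        have Fj: "F t w = FF j t w" for w
        proof -
          have "F t w = complex_of_real (indicator (I j) t) * FF j t w + (\<Sum>j'\<in>{..<k} - {j}. complex_of_real (indicator (I j') t) * FF j' t w)"
            unfolding F_def using j(1) by (subst sum.remove[of _ j]) auto
          also have "(\<Sum>j'\<in>{..<k} - {j}. complex_of_real (indicator (I j') t) * FF j' t w) = 0"
          proof (rule sum.neutral, intro ballI)
            fix j' assume j': "j' \<in> {..<k} - {j}"
            have "t \<notin> I j'"
            proof
              assume "t \<in> I j'"
              hence "j' = j" using interval_unique[OF k0, of t j' j] j(2) by (auto simp: I_def)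
              thus False using j' by simp
            qed
            thus "complex_of_real (indicator (I j') t) * FF j' t w = 0" by simp
          qed
          finally show ?thesis using j(2) by simp
        qed
        have "AE w in M. FF j t w = \<phi> (\<gamma> (T j) + c j t) x w" using FG j(1) by blast
        moreover have "\<gamma> (T j) + c j t = \<gamma> t" using j(2) by (simp add: c_def)
        ultimately show "AE w in M. F t w = \<phi> (\<gamma> t) x w" by (simp add: Fj)
      qed
    qed
    have gj: "(\<lambda>w. complex_of_real (cmod (GG j w))) \<in> Lp_set p M \<and> lp_norm p M (\<lambda>w. complex_of_real (cmod (GG j w))) \<le> KK j * lp_norm p M x"
      if "j < k" for j
    proof -
      have GL: "GG j \<in> Lp_set p M" "lp_norm p M (GG j) \<le> KK j * lp_norm p M x" using FG that by auto
      have GGm[measurable]: "GG j \<in> borel_measurable M" using GL by (simp add: Lp_set_def)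
      have m: "(\<lambda>w. complex_of_real (cmod (GG j w))) \<in> borel_measurable M" by measurable
      show ?thesis using Lp_mono[OF GL(1) m p0] GL(2) by auto
    qed
    have gsum: "(\<lambda>w. \<Sum>j<k. complex_of_real (cmod (GG j w))) \<in> Lp_set p M \<and>
        lp_norm p M (\<lambda>w. \<Sum>j<k. complex_of_real (cmod (GG j w))) \<le> (\<Sum>j<k. lp_norm p M (\<lambda>w. complex_of_real (cmod (GG j w))))"
      by (rule Lp_sum) (use gj p in auto)
    have geq: "(\<lambda>w. complex_of_real (g w)) = (\<lambda>w. \<Sum>j<k. complex_of_real (cmod (GG j w)))"
      by (simp add: g_def of_real_sum)
    have gL: "(\<lambda>w. complex_of_real (g w)) \<in> Lp_set p M" "lp_norm p M (\<lambda>w. complex_of_real (g w)) \<le> (\<Sum>j<k. KK j) * lp_norm p M x"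
    proof -
      show "(\<lambda>w. complex_of_real (g w)) \<in> Lp_set p M" using gsum geq by simp
      have "(\<Sum>j<k. lp_norm p M (\<lambda>w. complex_of_real (cmod (GG j w)))) \<le> (\<Sum>j<k. KK j * lp_norm p M x)"
        using gj by (intro sum_mono) auto
      thus "lp_norm p M (\<lambda>w. complex_of_real (g w)) \<le> (\<Sum>j<k. KK j) * lp_norm p M x"
        using gsum geq by (simp add: sum_distrib_right)
    qed
    have h_eq: "(\<lambda>t. indicator {0..1} t *\<^sub>R ((cmod (F t w))\<^sup>2 * norm (vector_derivative \<gamma> (at t within {0..1}))))
        = (\<lambda>t. (cmod (F t w))\<^sup>2 * V t)" for w
    proof
      fix t
      show "indicator {0..1} t *\<^sub>R ((cmod (F t w))\<^sup>2 * norm (vector_derivative \<gamma> (at t within {0..1}))) = (cmod (F t w))\<^sup>2 * V t"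
        using Vvd[of t] by (simp add: algebra_simps)
    qed
    have dom_int: "integrable lborel (\<lambda>t. (g w)\<^sup>2 * Md * indicator {0..1::real} t)" for w
      by (intro integrable_mult_right integrable_real_indicator) auto
    have Ftm: "(\<lambda>t. F t w) \<in> borel_measurable lborel" if "w \<in> space M" for w
      using measurable_Pair1[OF Fm that] by simp
    have hb: "(cmod (F t w))\<^sup>2 * V t \<le> (g w)\<^sup>2 * Md * indicator {0..1::real} t" for t w
    proof -
      have "(cmod (F t w))\<^sup>2 \<le> (g w)\<^sup>2" using Fb[of t w] by (intro power_mono) auto
      hence "(cmod (F t w))\<^sup>2 * V t \<le> (g w)\<^sup>2 * (indicator {0..1::real} t * Md)"
        using VM[of t] V0[of t] by (intro mult_mono) auto
      thus ?thesis by (simp add: algebra_simps)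
    qed
    have hint: "integrable lborel (\<lambda>t. (cmod (F t w))\<^sup>2 * V t)" if "w \<in> space M" for w
    proof (rule Bochner_Integration.integrable_bound[OF dom_int])
      show "(\<lambda>t. (cmod (F t w))\<^sup>2 * V t) \<in> borel_measurable lborel"
        using Ftm[OF that] by measurable
      show "AE t in lborel. norm ((cmod (F t w))\<^sup>2 * V t) \<le> norm ((g w)\<^sup>2 * Md * indicator {0..1::real} t)"
        using hb V0 Md0 by (intro AE_I2) (auto simp: abs_mult)
    qed
    define J where "J w = integral\<^sup>L lborel (\<lambda>t. (cmod (F t w))\<^sup>2 * V t)" for w
    have Jm: "J \<in> borel_measurable M"
    proof -
      have sw: "(\<lambda>(w,t). F t w) \<in> borel_measurable (M \<Otimes>\<^sub>M lborel)"
        using measurable_pair_swap[OF Fm] by simp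
      have "(\<lambda>(w,t). (cmod (F t w))\<^sup>2 * V t) \<in> borel_measurable (M \<Otimes>\<^sub>M lborel)"
        using sw by measurable
      hence "case_prod (\<lambda>w t. (cmod (F t w))\<^sup>2 * V t) \<in> borel_measurable (M \<Otimes>\<^sub>M lborel)" by simp
      from sigma_finite_measure.borel_measurable_lebesgue_integral[OF sigma_finite_lborel this]
      show ?thesis by (simp add: J_def[abs_def])
    qed
    have J0: "J w \<ge> 0" for w unfolding J_def using V0 by (intro integral_nonneg_AE) auto
    have Jb: "J w \<le> (g w)\<^sup>2 * Md" if "w \<in> space M" for w
    proof -
      have "J w \<le> integral\<^sup>L lborel (\<lambda>t. (g w)\<^sup>2 * Md * indicator {0..1::real} t)"
        unfolding J_def by (rule integral_mono[OF hint[OF that] dom_int hb])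
      also have "\<dots> = (g w)\<^sup>2 * Md" by simp
      finally show ?thesis .
    qed
    define S where "S w = complex_of_real (sqrt (LINT t:{0..1}|lborel.
                       (cmod (F t w))\<^sup>2 * norm (vector_derivative \<gamma> (at t within {0..1}))))" for w
    have SJ: "S w = complex_of_real (sqrt (J w))" for w
      unfolding S_def J_def set_lebesgue_integral_def h_eq ..
    have Sm: "S \<in> borel_measurable M" unfolding SJ[abs_def] using Jm by measurable
    have cL: "(\<lambda>w. complex_of_real (sqrt Md) * complex_of_real (g w)) \<in> Lp_set p M"
      "lp_norm p M (\<lambda>w. complex_of_real (sqrt Md) * complex_of_real (g w)) = sqrt Md * lp_norm p M (\<lambda>w. complex_of_real (g w))"
      using Lp_scale[OF gL(1) p0, of "complex_of_real (sqrt Md)"] Md0 by auto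
    have Sb: "AE w in M. cmod (S w) \<le> cmod (complex_of_real (sqrt Md) * complex_of_real (g w))"
    proof (rule AE_I2)
      fix w assume w: "w \<in> space M"
      have "sqrt (J w) \<le> sqrt ((g w)\<^sup>2 * Md)" using Jb[OF w] by simp
      also have "\<dots> = sqrt Md * g w" using g0[of w] by (simp add: real_sqrt_mult)
      finally show "cmod (S w) \<le> cmod (complex_of_real (sqrt Md) * complex_of_real (g w))"
        using J0[of w] g0[of w] Md0 by (simp add: SJ norm_mult abs_mult)
    qed
    have SL: "S \<in> Lp_set p M" by (rule Lp_mono(1)[OF cL(1) Sm p0 Sb])
    have "lp_norm p M S \<le> sqrt Md * lp_norm p M (\<lambda>w. complex_of_real (g w))"
      using Lp_mono(2)[OF cL(1) Sm p0 Sb] cL(2) by simp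
    also have "\<dots> \<le> sqrt Md * ((\<Sum>j<k. KK j) * lp_norm p M x)" using gL(2) Md0 by (intro mult_left_mono) auto
    also have "\<dots> = C * lp_norm p M x" by (simp add: C_def)
    finally have Sn: "lp_norm p M S \<le> C * lp_norm p M x" .
    have SI: "AE w in M. set_integrable lborel {0..1}
              (\<lambda>t. (cmod (F t w))\<^sup>2 * norm (vector_derivative \<gamma> (at t within {0..1})))"
      unfolding set_integrable_def h_eq by (intro AE_I2 hint)
    show ?thesis
      apply (rule exI[of _ F])
      using Fm AEF SI SL Sn unfolding Let_def S_def by blast
  qed
  show ?thesis using main C0 by blast
qed

end
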